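(* Suppose the location depends only on the parameter of interest and the scatter only on the nuisance: $\mu(\theta)=\mu(\gamma)$, $\Sigma(\theta)=\Sigma(\xi)$, with the parameterization satisfying P1–P4. Then $\bar{\mathbf I}(\gamma_0\mid\xi_0,\bar g_0)=\bar{\mathbf I}(\gamma_0\mid\xi_0)=\mathbf I_{\gamma_0}$, i.e. the semiparametric efficient FIM (density generator and $\xi$ unknown) coincides with the parametric efficient FIM ($\bar g_0$ known, $\xi$ unknown), which in turn coincides with the FIM for $\gamma$ when both $\xi_0$ and $\bar g_0$ are known.
   Context: RES model: $\mathcal G$ = measurable $g:\mathbb R^+\to\mathbb R^+_0$ with $\int_0^\infty t^{m/2-1}g(t)dt=\delta_m:=\pi^{-m/2}\Gamma(m/2)$; $RES_m(\mu,\Sigma,g)$ has density $|\Sigma|^{-1/2}g((\mathbf x-\mu)^T\Sigma^{-1}(\mathbf x-\mu))$; $\overline{\mathcal G}=\{\bar g\in\mathcal G:\delta_m^{-1}\int_0^\infty q^{m/2}\bar g(q)dq=m\}$. Parametrized model: $\theta=(\gamma^T,\xi^T)^T\in\Gamma\times\Psi\subseteq\mathbb R^q\times\mathbb R^r$ open, differentiable $\theta\mapsto\mu(\theta)$, $\theta\mapsto\Sigma(\theta)$ with (P1) continuity; (P2) the Jacobian of $\theta\mapsto(\mu(\theta)^T,\mathrm{vecs}(\Sigma(\theta))^T)^T$ has full column rank; (P3) $\Sigma(\theta)$ positive definite; (P4) $E_0\{\mathcal Q^2\}$, $\alpha(\bar g_0)$, $\beta(\bar g_0)$ finite. Truth $RES_m(\mu(\theta_0),\Sigma(\theta_0),\bar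 g_0)$, $\bar g_0\in\overline{\mathcal G}$ positive and $C^1$ with $q^{m/2+1}\bar g_0(q)\to0$; $\mathcal Q=(\mathbf x-\mu_0)^T\Sigma_0^{-1}(\mathbf x-\mu_0)$, $\bar\varphi_0=-2\bar g_0'/\bar g_0$, $\alpha(\bar g_0)=E_0\{\mathcal Q^2\bar\varphi_0(\mathcal Q)^2\}/(m(m+2))$, $\beta(\bar g_0)=E_0\{\mathcal Q\bar\varphi_0(\mathcal Q)^2\}/m$. $\mathbf s_{\theta_0}=(\mathbf s_{\gamma_0}^T,\mathbf s_{\xi_0}^T)^T$: gradient at $\theta_0$ of $\log(|\Sigma(\theta)|^{-1/2}\bar g_0((\mathbf x-\mu(\theta))^T\Sigma(\theta)^{-1}(\mathbf x-\mu(\theta))))$; FIM blocks $\mathbf I_{\gamma_0}=E_0\{\mathbf s_{\gamma_0}\mathbf s_{\gamma_0}^T\}$, $\mathbf I_{\gamma_0\xi_0}$, $\mathbf I_{\xi_0}$. $\mathcal H=\{h:E_0h=0,E_0h^2<\infty\}$ with $\langle h_1,h_2\rangle=E_0\{h_1h_2\}$; $\mathcal T_{\xi_0}=\mathrm{Span}$ of components of $\mathbf s_{\xi_0}$; $\mathcal T^u=\{h\in\mathcal H:h=f(\mathcal Q)\text{ a.s.}\}$, $\mathcal T^c=\{h\in\mathcal T^u:E_0\{\mathcal Qh\}=0\}$. $\bar{\mathbf I}(\gamma_0\mid\xi_0)=\mathbf I_{\gamma_0}-\mathbf I_{\gamma_0\xi_0}\mathbf I_{\xi_0}^{-1}\mathbf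 I_{\gamma_0\xi_0}^T$; $\bar{\mathbf I}(\gamma_0\mid\xi_0,\bar g_0)=E_0\{\bar{\mathbf s}\bar{\mathbf s}^T\}$, $\bar{\mathbf s}=\mathbf s_{\gamma_0}-\Pi(\mathbf s_{\gamma_0}\mid\mathcal T_{\xi_0}+\mathcal T^c)$ (componentwise orthogonal projection). *)

theory Defs
  imports "HOL-Analysis.Analysis"
begin

definition delta_m :: "nat \<Rightarrow> real" where
  "delta_m m = pi powr (- real m / 2) * Gamma (real m / 2)"

definition G_class :: "nat \<Rightarrow> (real \<Rightarrow> real) \<Rightarrow> bool" where
  "G_class m g \<longleftrightarrow>
     set_borel_measurable borel {0<..} g \<and> (\<forall>t>0. 0 \<le> g t) \<and>
     ((\<lambda>t. t powr (real m / 2 - 1) * g t) has_integral delta_m m) {0<..}"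

definition Gbar_class :: "nat \<Rightarrow> (real \<Rightarrow> real) \<Rightarrow> bool" where
  "Gbar_class m g \<longleftrightarrow> G_class m g \<and>
     (\<lambda>q. q powr (real m / 2) * g q) integrable_on {0<..} \<and>
     integral {0<..} (\<lambda>q. q powr (real m / 2) * g q) / delta_m m = real m"

definition sym_posdef :: "real^'n^'n \<Rightarrow> bool" where
  "sym_posdef A \<longleftrightarrow> transpose A = A \<and> (\<forall>v. v \<noteq> 0 \<longrightarrow> 0 < v \<bullet> (A *v v))"

definition mahal :: "real^'m \<Rightarrow> real^'m^'m \<Rightarrow> real^'m \<Rightarrow> real" where
  "mahal mu S x = (x - mu) \<bullet> (matrix_inv S *v (x - mu))"

definition RES_density :: "real^'m \<Rightarrow> real^'m^'m \<Rightarrow> (real \<Rightarrow> real) \<Rightarrow> real^'m \<Rightarrow> real" where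
  "RES_density mu S g x = det S powr (-1/2) * g (mahal mu S x)"

definition RES :: "real^'m \<Rightarrow> real^'m^'m \<Rightarrow> (real \<Rightarrow> real) \<Rightarrow> (real^'m) measure" where
  "RES mu S g = density lborel (\<lambda>x. ennreal (RES_density mu S g x))"

definition gradient :: "('a::real_inner \<Rightarrow> real) \<Rightarrow> 'a \<Rightarrow> 'a" where
  "gradient f a = (THE v. (f has_derivative (\<lambda>h. v \<bullet> h)) (at a))"

definition log_lik :: "(real^'q \<Rightarrow> real^'m) \<Rightarrow> (real^'r \<Rightarrow> real^'m^'m) \<Rightarrow> (real \<Rightarrow> real)
    \<Rightarrow> real^'m \<Rightarrow> ((real^'q) \<times> (real^'r)) \<Rightarrow> real" where
  "log_lik mu Sig g x \<theta> = ln (RES_density (mu (fst \<theta>)) (Sig (snd \<theta>)) g x)"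

definition score :: "(real^'q \<Rightarrow> real^'m) \<Rightarrow> (real^'r \<Rightarrow> real^'m^'m) \<Rightarrow> (real \<Rightarrow> real)
    \<Rightarrow> ((real^'q) \<times> (real^'r)) \<Rightarrow> real^'m \<Rightarrow> (real^'q) \<times> (real^'r)" where
  "score mu Sig g \<theta>0 x = gradient (log_lik mu Sig g x) \<theta>0"

definition Emat :: "'a measure \<Rightarrow> ('a \<Rightarrow> real^'p) \<Rightarrow> ('a \<Rightarrow> real^'s) \<Rightarrow> real^'s^'p" where
  "Emat M u v = (\<chi> i j. integral\<^sup>L M (\<lambda>x. u x $ i * v x $ j))"

definition L2_0 :: "'a measure \<Rightarrow> ('a \<Rightarrow> real) set" where
  "L2_0 M = {h. h \<in> borel_measurable M \<and> integrable M h \<and>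
                integrable M (\<lambda>x. (h x)\<^sup>2) \<and> integral\<^sup>L M h = 0}"

definition span_comp :: "('a \<Rightarrow> real^'r) \<Rightarrow> ('a \<Rightarrow> real) set" where
  "span_comp s = {(\<lambda>x. c \<bullet> s x) | c. True}"

definition T_u :: "'a measure \<Rightarrow> ('a \<Rightarrow> real) \<Rightarrow> ('a \<Rightarrow> real) set" where
  "T_u M Q = {h \<in> L2_0 M. \<exists>f \<in> borel_measurable borel. AE x in M. h x = f (Q x)}"

definition T_c :: "'a measure \<Rightarrow> ('a \<Rightarrow> real) \<Rightarrow> ('a \<Rightarrow> real) set" where
  "T_c M Q = {h \<in> T_u M Q. integral\<^sup>L M (\<lambda>x. Q x * h x) = 0}"

definition fun_set_plus :: "('a \<Rightarrow> real) set \<Rightarrow> ('a \<Rightarrow> real) set \<Rightarrow> ('a \<Rightarrow> real) set" where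
  "fun_set_plus A B = {(\<lambda>x. a x + b x) | a b. a \<in> A \<and> b \<in> B}"

definition is_orth_proj :: "'a measure \<Rightarrow> ('a \<Rightarrow> real) set \<Rightarrow> ('a \<Rightarrow> real) \<Rightarrow> ('a \<Rightarrow> real) \<Rightarrow> bool" where
  "is_orth_proj M S h p \<longleftrightarrow> p \<in> S \<and> (\<forall>f \<in> S. integral\<^sup>L M (\<lambda>x. (h x - p x) * f x) = 0)"

definition orth_proj :: "'a measure \<Rightarrow> ('a \<Rightarrow> real) set \<Rightarrow> ('a \<Rightarrow> real) \<Rightarrow> ('a \<Rightarrow> real)" where
  "orth_proj M S h = (SOME p. is_orth_proj M S h p)"

end

theory Submission
  imports Defs
begin

lemma minv_props:
  fixes A :: "real^'n^'n"
  assumes "invertible A"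
  shows "A ** matrix_inv A = mat 1" "matrix_inv A ** A = mat 1"
  using someI_ex[OF assms[unfolded invertible_def]] unfolding matrix_inv_def by auto

lemma quadpos_invertible:
  fixes A :: "real^'n^'n"
  assumes "\<forall>v. v \<noteq> 0 \<longrightarrow> 0 < v \<bullet> (A *v v)"
  shows "invertible A"
proof -
  have "inj ((*v) A)"
  proof (rule injI)
    fix x y assume "A *v x = A *v y"
    then have "A *v (x - y) = 0" by (simp add: matrix_vector_mult_diff_distrib)
    then show "x = y" using assms[rule_format, of "x-y"] by auto
  qed
  then show ?thesis using matrix_left_invertible_injective invertible_left_inverse by metis
qed

lemma minv_quadpos:
  fixes A :: "real^'n^'n"
  assumes pd: "\<forall>v. v \<noteq> 0 \<longrightarrow> 0 < v \<bullet> (A *v v)"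
  shows "\<forall>v. v \<noteq> 0 \<longrightarrow> 0 < v \<bullet> (matrix_inv A *v v)"
proof (intro allI impI)
  fix v :: "real^'n" assume v: "v \<noteq> 0"
  have inv: "invertible A" by (rule quadpos_invertible[OF pd])
  define w where "w = matrix_inv A *v v"
  have Aw: "A *v w = v" using minv_props(1)[OF inv] by (simp add: w_def matrix_vector_mul_assoc)
  have "w \<noteq> 0" using Aw v by auto
  then have "0 < w \<bullet> (A *v w)" using pd by auto
  then show "0 < v \<bullet> (matrix_inv A *v v)" using Aw by (simp add: w_def inner_commute)
qed

lemma quad_coercive:
  fixes B :: "real^'n^'n"
  assumes pd: "\<forall>v. v \<noteq> 0 \<longrightarrow> 0 < v \<bullet> (B *v v)"
  shows "\<exists>c>0. \<forall>v. c * (norm v)^2 \<le> v \<bullet> (B *v v)"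
proof -
  let ?f = "\<lambda>v::real^'n. v \<bullet> (B *v v)"
  have cont: "continuous_on (sphere 0 1) ?f"
    by (intro continuous_intros linear_continuous_on matrix_vector_mul_bounded_linear)
  have ne: "sphere (0::real^'n) 1 \<noteq> {}"
  proof -
    obtain k :: 'n where True by simp
    have "axis k (1::real) \<in> sphere 0 1" by (simp add: norm_axis_1)
    then show ?thesis by blast
  qed
  obtain u where u: "u \<in> sphere 0 1" "\<forall>v\<in>sphere 0 1. ?f u \<le> ?f v"
    using continuous_attains_inf[OF compact_sphere ne cont] by blast
  have u0: "u \<noteq> 0" using u(1) by auto
  have cpos: "0 < ?f u" using pd u0 by auto
  have "\<forall>v. ?f u * (norm v)^2 \<le> ?f v"
  proof
    fix v :: "real^'n"
    show "?f u * (norm v)^2 \<le> ?f v"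
    proof (cases "v = 0")
      case True then show ?thesis by simp
    next
      case False
      define w where "w = (1 / norm v) *\<^sub>R v"
      have wn: "w \<in> sphere 0 1" using False by (simp add: w_def)
      have vw: "v = norm v *\<^sub>R w" using False by (simp add: w_def)
      have "?f v = (norm v)^2 * ?f w"
        by (subst vw, subst vw) (simp add: matrix_vector_mult_scaleR power2_eq_square)
      moreover have "?f u \<le> ?f w" using u(2) wn by blast
      ultimately show ?thesis by (simp add: mult_right_mono mult.commute)
    qed
  qed
  then show ?thesis using cpos by blast
qed

lemma quadpos_det_pos:
  fixes A :: "real^'n^'n"
  assumes pd: "\<forall>v. v \<noteq> 0 \<longrightarrow> 0 < v \<bullet> (A *v v)"
  shows "0 < det A"
proof (rule ccontr)
  assume neg: "\<not> 0 < det A"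
  define M where "M t = (1 - t) *\<^sub>R mat 1 + t *\<^sub>R A" for t :: real
  have ent: "M t $ i $ j = (1 - t) * (mat 1 :: real^'n^'n) $ i $ j + t * A $ i $ j" for t i j
    by (simp add: M_def)
  have cont: "continuous_on {0..1} (\<lambda>t. det (M t))"
    unfolding det_def ent by (intro continuous_intros)
  have d0: "det (M 0) = 1" by (simp add: M_def)
  have d1: "det (M 1) = det A" by (simp add: M_def)
  obtain t where t: "0 \<le> t" "t \<le> 1" "det (M t) = 0"
    using IVT2'[of "\<lambda>t. det (M t)" 1 0 0, OF _ _ _ cont] neg d0 d1 by auto
  have "\<forall>v. v \<noteq> 0 \<longrightarrow> 0 < v \<bullet> (M t *v v)"
  proof (intro allI impI)
    fix v :: "real^'n" assume v: "v \<noteq> 0"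
    have eq: "v \<bullet> (M t *v v) = (1 - t) * (v \<bullet> v) + t * (v \<bullet> (A *v v))"
      by (simp add: M_def matrix_vector_mult_add_rdistrib inner_add_right scaleR_matrix_vector_assoc[symmetric])
    have "0 < v \<bullet> v" using v by simp
    moreover have "0 < v \<bullet> (A *v v)" using pd v by auto
    ultimately have "0 < (1 - t) * (v \<bullet> v) + t * (v \<bullet> (A *v v))" using t
    proof (cases "t = 1")
      case False
      then have "0 < 1 - t" using t by simp
      then show ?thesis using \<open>0 < v \<bullet> v\<close> \<open>0 < v \<bullet> (A *v v)\<close> t
        by (intro add_pos_nonneg) auto
    qed auto
    then show "0 < v \<bullet> (M t *v v)" by (simp only: eq)
  qed
  then have "invertible (M t)" by (rule quadpos_invertible)
  then show False using t(3) invertible_det_nz by blast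
qed

lemma gradient_eq:
  fixes f :: "'a::euclidean_space \<Rightarrow> real"
  assumes der: "(f has_derivative L) (at a)"
  shows "gradient f a \<bullet> h = L h"
proof -
  have bl: "bounded_linear L" using der has_derivative_bounded_linear by blast
  then interpret L: bounded_linear L .
  define v where "v = (\<Sum>b\<in>Basis. L b *\<^sub>R b)"
  have Lv: "L = (\<lambda>h. v \<bullet> h)"
  proof
    fix h
    have "L h = L (\<Sum>b\<in>Basis. (h \<bullet> b) *\<^sub>R b)" by (simp add: euclidean_representation)
    also have "\<dots> = (\<Sum>b\<in>Basis. (h \<bullet> b) * L b)" by (simp add: L.sum L.scaleR)
    also have "\<dots> = v \<bullet> h" by (simp add: v_def inner_sum_right inner_commute mult.commute)
    finally show "L h = v \<bullet> h" .
  qed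
  have "gradient f a = v"
    unfolding gradient_def
  proof (rule the_equality)
    show "(f has_derivative (\<lambda>h. v \<bullet> h)) (at a)" using der Lv by simp
    fix w assume "(f has_derivative (\<lambda>h. w \<bullet> h)) (at a)"
    then have "(\<lambda>h. w \<bullet> h) = (\<lambda>h. v \<bullet> h)" using has_derivative_unique der Lv by metis
    then have "w \<bullet> (w - v) = v \<bullet> (w - v)" by metis
    then have "(w - v) \<bullet> (w - v) = 0" by (simp add: inner_diff_left)
    then show "w = v" by simp
  qed
  then show ?thesis using Lv by simp
qed

lemma det_differentiable:
  fixes f :: "'a::real_normed_vector \<Rightarrow> real^'n^'n"
  assumes "\<And>i j. (\<lambda>x. f x $ i $ j) differentiable (at x)"
  shows "(\<lambda>x. det (f x)) differentiable (at x)"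
proof -
  from assms have "\<forall>ij. \<exists>D. ((\<lambda>x. f x $ fst ij $ snd ij) has_derivative D) (at x)"
    unfolding differentiable_def by blast
  then obtain D where D: "\<And>ij. ((\<lambda>x. f x $ fst ij $ snd ij) has_derivative D ij) (at x)"
    by metis
  have D': "\<And>i j. ((\<lambda>x. f x $ i $ j) has_derivative D (i, j)) (at x)"
    using D[of "(i, j)" for i j] by simp
  show ?thesis
    unfolding det_def differentiable_def
    apply (rule exI)
    apply (rule has_derivative_sum)
    apply (rule has_derivative_mult)
     apply (rule has_derivative_const)
    apply (rule has_derivative_prod)
    apply (rule D')
    done
qed

lemma minv_entry_cramer:
  fixes A :: "real^'n^'n"
  assumes "invertible A"
  shows "matrix_inv A $ i $ j = det (\<chi> a b. if b = i then axis j 1 $ a else A $ a $ b) / det A"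
proof -
  have d: "det A \<noteq> 0" using assms invertible_det_nz by blast
  let ?x = "matrix_inv A *v axis j 1"
  have "A *v ?x = axis j 1" using minv_props(1)[OF assms] by (simp add: matrix_vector_mul_assoc)
  then have "?x = (\<chi> k. det (\<chi> a b. if b = k then axis j 1 $ a else A $ a $ b) / det A)"
    using cramer[OF d] by blast
  then have "?x $ i = det (\<chi> a b. if b = i then axis j 1 $ a else A $ a $ b) / det A" by simp
  moreover have "?x $ i = matrix_inv A $ i $ j" by (simp add: matrix_vector_mult_basis column_def)
  ultimately show ?thesis by simp
qed

lemma entry_has_derivative:
  assumes "(Sig has_derivative DS) F"
  shows "((\<lambda>x. Sig x $ a $ b) has_derivative (\<lambda>h. DS h $ a $ b)) F"
  using bounded_linear.has_derivative[OF bounded_linear_vec_nth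
      bounded_linear.has_derivative[OF bounded_linear_vec_nth assms]] .

lemma minv_entry_differentiable:
  fixes Sig :: "'a::real_normed_vector \<Rightarrow> real^'n^'n"
  assumes "Sig differentiable (at x0)" "open S" "x0 \<in> S" "\<forall>x\<in>S. invertible (Sig x)"
  shows "(\<lambda>x. matrix_inv (Sig x) $ i $ j) differentiable (at x0)"
proof -
  obtain DS where DS: "(Sig has_derivative DS) (at x0)" using assms(1) differentiable_def by blast
  have ent: "(\<lambda>x. Sig x $ a $ b) differentiable (at x0)" for a b
    unfolding differentiable_def using entry_has_derivative[OF DS] by blast
  have ent2: "(\<lambda>x. (\<chi> a b. if b = i then axis j 1 $ a else Sig x $ a $ b) $ a' $ b') differentiable (at x0)" for a' b'
    by (cases "b' = i") (simp_all add: ent)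
  have num: "(\<lambda>x. det (\<chi> a b. if b = i then axis j 1 $ a else Sig x $ a $ b)) differentiable (at x0)"
    by (rule det_differentiable[OF ent2])
  have den: "(\<lambda>x. det (Sig x)) differentiable (at x0)" by (rule det_differentiable[OF ent])
  have nz: "det (Sig x0) \<noteq> 0" using assms invertible_det_nz by blast
  have "(\<lambda>x. det (\<chi> a b. if b = i then axis j 1 $ a else Sig x $ a $ b) / det (Sig x)) differentiable (at x0)"
    using differentiable_divide[OF num den nz] .
  then obtain D where D: "((\<lambda>x. det (\<chi> a b. if b = i then axis j 1 $ a else Sig x $ a $ b) / det (Sig x)) has_derivative D) (at x0)"
    using differentiable_def by blast
  have "((\<lambda>x. matrix_inv (Sig x) $ i $ j) has_derivative D) (at x0)"
    by (rule has_derivative_transform_within_open[OF D assms(2,3)]) (simp add: minv_entry_cramer assms(4))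
  then show ?thesis using differentiable_def by blast
qed

lemma mahal_expand:
  "mahal m S x = (\<Sum>a\<in>UNIV. \<Sum>b\<in>UNIV. (x - m) $ a * (matrix_inv S $ a $ b * (x - m) $ b))"
  unfolding mahal_def inner_vec_def matrix_vector_mult_def by (simp add: sum_distrib_left)

lemma loglik_deriv:
  fixes mu :: "real^'q \<Rightarrow> real^'m" and Sig :: "real^'r \<Rightarrow> real^'m^'m"
  assumes Dmu: "(mu has_derivative Dmu) (at \<gamma>0)"
    and Dn: "\<And>a b. ((\<lambda>\<xi>. matrix_inv (Sig \<xi>) $ a $ b) has_derivative Dn a b) (at \<xi>0)"
    and DP: "((\<lambda>\<xi>. det (Sig \<xi>) powr (-1/2)) has_derivative DP) (at \<xi>0)"
    and g0d: "(g0 has_real_derivative g1) (at (mahal (mu \<gamma>0) (Sig \<xi>0) x))"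
    and pos: "0 < det (Sig \<xi>0) powr (-1/2) * g0 (mahal (mu \<gamma>0) (Sig \<xi>0) x)"
  shows "(log_lik mu Sig g0 x has_derivative
     (\<lambda>h. inverse (det (Sig \<xi>0) powr (-1/2) * g0 (mahal (mu \<gamma>0) (Sig \<xi>0) x)) *
        (det (Sig \<xi>0) powr (-1/2) * (g1 *
          (\<Sum>a\<in>UNIV. \<Sum>b\<in>UNIV. (x - mu \<gamma>0) $ a * (matrix_inv (Sig \<xi>0) $ a $ b * (- Dmu (fst h) $ b)
              + Dn a b (snd h) * (x - mu \<gamma>0) $ b) + (- Dmu (fst h) $ a) * (matrix_inv (Sig \<xi>0) $ a $ b * (x - mu \<gamma>0) $ b)))
         + DP (snd h) * g0 (mahal (mu \<gamma>0) (Sig \<xi>0) x)))) (at (\<gamma>0, \<xi>0))"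
proof -
  let ?t0 = "(\<gamma>0, \<xi>0)"
  have mu1: "((\<lambda>\<theta>. mu (fst \<theta>)) has_derivative (\<lambda>h. Dmu (fst h))) (at ?t0)"
    by (rule has_derivative_compose[OF has_derivative_fst[OF has_derivative_ident]]) (simp add: Dmu)
  have u: "((\<lambda>\<theta>. (x - mu (fst \<theta>)) $ a) has_derivative (\<lambda>h. - Dmu (fst h) $ a)) (at ?t0)" for a
    using bounded_linear.has_derivative[OF bounded_linear_vec_nth has_derivative_diff[OF has_derivative_const mu1]]
    by simp
  have n: "((\<lambda>\<theta>. matrix_inv (Sig (snd \<theta>)) $ a $ b) has_derivative (\<lambda>h. Dn a b (snd h))) (at ?t0)" for a b
    by (rule has_derivative_compose[OF has_derivative_snd[OF has_derivative_ident]]) (simp add: Dn)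
  have P: "((\<lambda>\<theta>. det (Sig (snd \<theta>)) powr (-1/2)) has_derivative (\<lambda>h. DP (snd h))) (at ?t0)"
    by (rule has_derivative_compose[OF has_derivative_snd[OF has_derivative_ident]]) (use DP in simp)
  have R: "((\<lambda>\<theta>. mahal (mu (fst \<theta>)) (Sig (snd \<theta>)) x) has_derivative
     (\<lambda>h. (\<Sum>a\<in>UNIV. \<Sum>b\<in>UNIV. (x - mu \<gamma>0) $ a * (matrix_inv (Sig \<xi>0) $ a $ b * (- Dmu (fst h) $ b)
              + Dn a b (snd h) * (x - mu \<gamma>0) $ b) + (- Dmu (fst h) $ a) * (matrix_inv (Sig \<xi>0) $ a $ b * (x - mu \<gamma>0) $ b)))) (at ?t0)"
    unfolding mahal_expand
  proof (intro has_derivative_sum)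
    fix a b
    show "((\<lambda>\<theta>. (x - mu (fst \<theta>)) $ a * (matrix_inv (Sig (snd \<theta>)) $ a $ b * (x - mu (fst \<theta>)) $ b)) has_derivative
     (\<lambda>h. (x - mu \<gamma>0) $ a * (matrix_inv (Sig \<xi>0) $ a $ b * (- Dmu (fst h) $ b)
              + Dn a b (snd h) * (x - mu \<gamma>0) $ b) + (- Dmu (fst h) $ a) * (matrix_inv (Sig \<xi>0) $ a $ b * (x - mu \<gamma>0) $ b))) (at ?t0)"
      using has_derivative_mult[OF u[of a] has_derivative_mult[OF n[of a b] u[of b]]] by simp
  qed
  have g: "(g0 has_derivative (*) g1) (at (mahal (mu (fst ?t0)) (Sig (snd ?t0)) x))"
    using g0d by (simp add: has_field_derivative_def)
  note gR = has_derivative_compose[OF R g]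
  note PG = has_derivative_mult[OF P gR]
  have lnd: "(ln has_derivative (*) (inverse (det (Sig \<xi>0) powr (-1/2) * g0 (mahal (mu \<gamma>0) (Sig \<xi>0) x))))
       (at (det (Sig (snd ?t0)) powr (-1/2) * g0 (mahal (mu (fst ?t0)) (Sig (snd ?t0)) x)))"
    using DERIV_ln[OF pos] by (simp add: has_field_derivative_def)
  note L = has_derivative_compose[OF PG lnd]
  have eq: "log_lik mu Sig g0 x = (\<lambda>\<theta>. ln (det (Sig (snd \<theta>)) powr (-1/2) * g0 (mahal (mu (fst \<theta>)) (Sig (snd \<theta>)) x)))"
    by (simp add: fun_eq_iff log_lik_def RES_density_def)
  show ?thesis unfolding eq using L by simp
qed

lemma deriv_zero: "(f has_derivative f') F \<Longrightarrow> f' 0 = 0"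
  by (metis has_derivative_bounded_linear bounded_linear.linear real_vector.linear_0)

lemma sym_posdef_quad: "sym_posdef A \<Longrightarrow> \<forall>v. v \<noteq> 0 \<longrightarrow> 0 < v \<bullet> (A *v v)"
  unfolding sym_posdef_def by blast

locale RESsetup =
  fixes \<Gamma> :: "(real^'q) set" and \<Psi> :: "(real^'r) set"
    and mu :: "real^'q \<Rightarrow> real^'m" and Sig :: "real^'r \<Rightarrow> real^'m^'m"
    and g0 :: "real \<Rightarrow> real" and \<gamma>0 :: "real^'q" and \<xi>0 :: "real^'r"
  assumes opG: "open \<Gamma>" and opP: "open \<Psi>"
    and dmu: "mu differentiable_on \<Gamma>" and dSig: "Sig differentiable_on \<Psi>"
    and P3: "\<forall>\<xi>\<in>\<Psi>. sym_posdef (Sig \<xi>)"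
    and tg: "\<gamma>0 \<in> \<Gamma>" and tx: "\<xi>0 \<in> \<Psi>"
    and gcl: "Gbar_class CARD('m) g0"
    and gpos: "\<forall>t>0. 0 < g0 t"
    and gC1: "g0 C1_differentiable_on {0<..}"
begin

abbreviation "\<mu>0 \<equiv> mu \<gamma>0"
abbreviation "N0 \<equiv> matrix_inv (Sig \<xi>0)"
abbreviation "Qf \<equiv> mahal (mu \<gamma>0) (Sig \<xi>0)"
abbreviation "P0c \<equiv> det (Sig \<xi>0) powr (-1/2)"

definition "\<kappa> q = deriv g0 q / g0 q"
definition "Dmu = (SOME D. (mu has_derivative D) (at \<gamma>0))"
definition "Dn a b = (SOME D. ((\<lambda>\<xi>. matrix_inv (Sig \<xi>) $ a $ b) has_derivative D) (at \<xi>0))"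
definition "DP = (SOME D. ((\<lambda>\<xi>. det (Sig \<xi>) powr (-1/2)) has_derivative D) (at \<xi>0))"

definition "Lg i d = (\<Sum>a\<in>UNIV. \<Sum>b\<in>UNIV. d $ a * (N0 $ a $ b * (- Dmu (axis i 1) $ b))
                + (- Dmu (axis i 1) $ a) * (N0 $ a $ b * d $ b))"
definition "Lx j d = (\<Sum>a\<in>UNIV. \<Sum>b\<in>UNIV. d $ a * (Dn a b (axis j 1) * d $ b))"
definition "\<beta> j = DP (axis j 1) / P0c"

lemma pd0: "\<forall>v. v \<noteq> 0 \<longrightarrow> 0 < v \<bullet> (Sig \<xi>0 *v v)"
  using P3 tx sym_posdef_quad by blast

lemma pdN0: "\<forall>v. v \<noteq> 0 \<longrightarrow> 0 < v \<bullet> (N0 *v v)"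
  using minv_quadpos[OF pd0] .

lemma det0_pos: "0 < det (Sig \<xi>0)"
  using quadpos_det_pos[OF pd0] .

lemma P0c_pos: "0 < P0c"
  using det0_pos by simp

lemma Dmu_ok: "(mu has_derivative Dmu) (at \<gamma>0)"
proof -
  have "mu differentiable (at \<gamma>0)" using dmu opG tg differentiable_on_eq_differentiable_at by blast
  then show ?thesis unfolding Dmu_def differentiable_def by (rule someI_ex)
qed

lemma Sig_diff: "Sig differentiable (at \<xi>0)"
  using dSig opP tx differentiable_on_eq_differentiable_at by blast

lemma inv_Psi: "\<forall>\<xi>\<in>\<Psi>. invertible (Sig \<xi>)"
  using P3 sym_posdef_quad quadpos_invertible by blast

lemma Dn_ok: "((\<lambda>\<xi>. matrix_inv (Sig \<xi>) $ a $ b) has_derivative Dn a b) (at \<xi>0)"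
proof -
  have "(\<lambda>\<xi>. matrix_inv (Sig \<xi>) $ a $ b) differentiable (at \<xi>0)"
    by (rule minv_entry_differentiable[OF Sig_diff opP tx inv_Psi])
  then show ?thesis unfolding Dn_def differentiable_def by (rule someI_ex)
qed

lemma DP_ok: "((\<lambda>\<xi>. det (Sig \<xi>) powr (-1/2)) has_derivative DP) (at \<xi>0)"
proof -
  obtain DS where DS: "(Sig has_derivative DS) (at \<xi>0)" using Sig_diff differentiable_def by blast
  have "(\<lambda>\<xi>. det (Sig \<xi>)) differentiable (at \<xi>0)"
    by (rule det_differentiable) (use entry_has_derivative[OF DS] differentiable_def in blast)
  then obtain Dd where Dd: "((\<lambda>\<xi>. det (Sig \<xi>)) has_derivative Dd) (at \<xi>0)"
    using differentiable_def by blast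
  have pw: "((\<lambda>z. z powr (-1/2)) has_derivative (*) ((-1/2) * det (Sig \<xi>0) powr (-1/2 - 1))) (at (det (Sig \<xi>0)))"
    using has_real_derivative_powr[OF det0_pos, of "-1/2"] by (simp add: has_field_derivative_def)
  note pd = has_derivative_compose[OF Dd pw]
  then have "(\<lambda>\<xi>. det (Sig \<xi>) powr (-1/2)) differentiable (at \<xi>0)" using differentiable_def by blast
  then show ?thesis unfolding DP_def differentiable_def by (rule someI_ex)
qed

lemma g0_deriv:
  assumes "0 < q"
  shows "(g0 has_real_derivative deriv g0 q) (at q)"
proof -
  obtain D where D: "\<forall>v\<in>{0<..}. (g0 has_vector_derivative D v) (at v)"
    using gC1 unfolding C1_differentiable_on_def by blast
  then have "(g0 has_real_derivative D q) (at q)"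
    using assms by (simp add: has_real_derivative_iff_has_vector_derivative)
  then show ?thesis using DERIV_imp_deriv by metis
qed

lemma deriv_g0_cont: "continuous_on {0<..} (deriv g0)"
proof -
  obtain D where D: "\<forall>v\<in>{0<..}. (g0 has_vector_derivative D v) (at v)" "continuous_on {0<..} D"
    using gC1 unfolding C1_differentiable_on_def by blast
  have "\<forall>v\<in>{0<..}. deriv g0 v = D v"
    using D(1) by (metis DERIV_imp_deriv has_real_derivative_iff_has_vector_derivative)
  then show ?thesis using D(2) continuous_on_cong by blast
qed

lemma g0_cont: "continuous_on {0<..} g0"
  using gC1 C1_differentiable_imp_continuous_on by blast

lemma Qf_pos: "x \<noteq> \<mu>0 \<Longrightarrow> 0 < Qf x"
  using pdN0 unfolding mahal_def by auto

lemma Qf_zero: "Qf \<mu>0 = 0"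
  unfolding mahal_def by simp

lemma score_fst:
  assumes x: "x \<noteq> \<mu>0"
  shows "fst (score mu Sig g0 (\<gamma>0, \<xi>0) x) $ i = \<kappa> (Qf x) * Lg i (x - \<mu>0)"
proof -
  have q: "0 < Qf x" using Qf_pos[OF x] .
  have G: "0 < g0 (Qf x)" using gpos q by blast
  have pos: "0 < P0c * g0 (Qf x)" using P0c_pos G by simp
  note D = loglik_deriv[OF Dmu_ok Dn_ok DP_ok g0_deriv[OF q] pos]
  let ?s = "score mu Sig g0 (\<gamma>0, \<xi>0) x"
  have h1: "fst ?s $ i = ?s \<bullet> (axis i 1, 0)" by (cases ?s) (simp add: inner_axis)
  show ?thesis
    using gradient_eq[OF D, of "(axis i 1, 0)"] h1 P0c_pos G
    by (simp add: score_def deriv_zero[OF Dn_ok] deriv_zero[OF DP_ok] \<kappa>_def Lg_def field_simps)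
qed

lemma score_snd:
  assumes x: "x \<noteq> \<mu>0"
  shows "snd (score mu Sig g0 (\<gamma>0, \<xi>0) x) $ j = \<kappa> (Qf x) * Lx j (x - \<mu>0) + \<beta> j"
proof -
  have q: "0 < Qf x" using Qf_pos[OF x] .
  have G: "0 < g0 (Qf x)" using gpos q by blast
  have pos: "0 < P0c * g0 (Qf x)" using P0c_pos G by simp
  note D = loglik_deriv[OF Dmu_ok Dn_ok DP_ok g0_deriv[OF q] pos]
  let ?s = "score mu Sig g0 (\<gamma>0, \<xi>0) x"
  have h1: "snd ?s $ j = ?s \<bullet> (0, axis j 1)" by (cases ?s) (simp add: inner_axis)
  show ?thesis
    using gradient_eq[OF D, of "(0, axis j 1)"] h1 P0c_pos G
    by (simp add: score_def deriv_zero[OF Dmu_ok] \<kappa>_def Lx_def \<beta>_def field_simps)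
qed

end

context RESsetup begin


lemma Qf_cont: "continuous_on UNIV Qf"
  unfolding mahal_def
  by (intro continuous_intros bounded_linear.continuous_on[OF matrix_vector_mul_bounded_linear])

lemma Qf_meas[measurable]: "Qf \<in> borel_measurable borel"
  using borel_measurable_continuous_onI[OF Qf_cont] .

lemma Qf_nonneg: "0 \<le> Qf x"
  using Qf_pos[of x] Qf_zero by (cases "x = \<mu>0") auto

lemma Qf_eq0: "Qf x = 0 \<longleftrightarrow> x = \<mu>0"
  using Qf_pos[of x] Qf_zero by (cases "x = \<mu>0") auto

lemma Qf_scale: "Qf (\<mu>0 + c *\<^sub>R y) = c^2 * (y \<bullet> (N0 *v y))"
  unfolding mahal_def by (simp add: matrix_vector_mult_scaleR power2_eq_square)

definition "Eb = {y::real^'m. y \<bullet> (N0 *v y) \<le> 1}"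

lemma Eb_bounded: "bounded Eb"
proof -
  obtain c where c: "c > 0" "\<forall>v. c * (norm v)^2 \<le> v \<bullet> (N0 *v v)"
    using quad_coercive[OF pdN0] by blast
  have "norm y \<le> 1 + 1 / c" if "y \<in> Eb" for y
  proof -
    have "c * (norm y)^2 \<le> 1" using c(2) that unfolding Eb_def by (meson order_trans mem_Collect_eq)
    then have n2: "(norm y)^2 \<le> 1 / c" using c(1) by (simp add: field_simps)
    show ?thesis
    proof (cases "norm y \<le> 1")
      case True then show ?thesis using c(1) by (smt (verit) divide_pos_pos)
    next
      case False
      then have "norm y \<le> (norm y)^2"
        using mult_left_mono[of 1 "norm y" "norm y"] by (simp add: power2_eq_square)
      then show ?thesis using n2 by simp
    qed
  qed
  then show ?thesis unfolding bounded_iff by blast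
qed

lemma Eb_fin: "emeasure lborel Eb < \<infinity>"
  by (rule emeasure_bounded_finite[OF Eb_bounded])

definition "Vb = measure lborel Eb"

lemma Qf_level:
  assumes t: "0 < t"
  shows "emeasure lborel {x. Qf x \<le> t} = ennreal (t powr (real CARD('m) / 2) * Vb)"
proof -
  let ?c = "sqrt t"
  let ?T = "\<lambda>x::real^'m. \<mu>0 + ?c *\<^sub>R x"
  have c0: "?c \<noteq> 0" using t by simp
  have [measurable]: "{x. Qf x \<le> t} \<in> sets borel" by measurable
  have Tm[measurable]: "?T \<in> borel_measurable borel" by measurable
  have L: "lborel = density (distr lborel borel ?T) (\<lambda>_. ennreal (\<bar>?c\<bar> ^ DIM(real^'m)))"
    using lborel_affine[OF c0, of \<mu>0] by simp
  have "emeasure lborel {x. Qf x \<le> t} = emeasure (density (distr lborel borel ?T) (\<lambda>_. ennreal (\<bar>?c\<bar> ^ DIM(real^'m)))) {x. Qf x \<le> t}"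
    by (subst L) simp
  also have "\<dots> = ennreal (\<bar>?c\<bar> ^ DIM(real^'m)) * emeasure (distr lborel borel ?T) {x. Qf x \<le> t}"
    by (simp add: emeasure_density nn_integral_cmult_indicator)
  also have "\<dots> = ennreal (\<bar>?c\<bar> ^ DIM(real^'m)) * emeasure lborel (?T -` {x. Qf x \<le> t})"
    by (simp add: emeasure_distr)
  also have "?T -` {x. Qf x \<le> t} = Eb"
    using t by (auto simp: Eb_def Qf_scale)
  also have "emeasure lborel Eb = ennreal Vb"
    unfolding Vb_def using Eb_fin by (simp add: emeasure_eq_ennreal_measure)
  also have "\<bar>?c\<bar> ^ DIM(real^'m) = t powr (real CARD('m) / 2)"
  proof -
    have "\<bar>?c\<bar> ^ DIM(real^'m) = (t powr (1/2)) ^ CARD('m)" using t by (simp add: powr_half_sqrt)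
    also have "\<dots> = (t powr (1/2)) powr (real CARD('m))" using t by (simp add: powr_realpow)
    also have "\<dots> = t powr (real CARD('m) / 2)" by (simp add: powr_powr)
    finally show ?thesis .
  qed
  finally show ?thesis using t by (simp add: ennreal_mult' Vb_def)
qed

lemma Vb_nonneg: "0 \<le> Vb" unfolding Vb_def by simp

definition "cQ = Vb * real CARD('m) / 2"
definition "dQ s = ennreal (indicator {0<..} s * (cQ * s powr (real CARD('m) / 2 - 1)))"

lemma dQ_meas[measurable]: "dQ \<in> borel_measurable borel"
  unfolding dQ_def by measurable

lemma dQ_int:
  assumes s: "0 < s"
  shows "(\<integral>\<^sup>+y. dQ y * indicator {..s} y \<partial>lborel) = ennreal (s powr (real CARD('m) / 2) * Vb)"
proof -
  let ?a = "real CARD('m) / 2"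
  have a0: "0 < ?a" by simp
  let ?F = "\<lambda>y. Vb * y powr ?a"
  have cont: "continuous_on {0..s} ?F"
    by (intro continuous_intros continuous_on_powr') (use a0 in auto)
  have der: "(?F has_vector_derivative (cQ * y powr (?a - 1))) (at y)" if "y \<in> {0<..<s}" for y
  proof -
    have "y > 0" using that by simp
    then have "((\<lambda>y. y powr ?a) has_real_derivative ?a * y powr (?a - 1)) (at y)"
      by (rule has_real_derivative_powr)
    then have "(?F has_real_derivative Vb * (?a * y powr (?a - 1))) (at y)"
      by (rule DERIV_cmult)
    then show ?thesis unfolding has_real_derivative_iff_has_vector_derivative[symmetric] cQ_def
      by (simp add: field_simps)
  qed
  have "((\<lambda>y. cQ * y powr (?a - 1)) has_integral (?F s - ?F 0)) {0..s}"
    using fundamental_theorem_of_calculus_interior[OF _ cont der] s by simp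
  then have I: "((\<lambda>y. cQ * y powr (?a - 1)) has_integral (s powr ?a * Vb)) {0..s}"
    by (simp add: mult.commute)
  have nn: "0 \<le> cQ * y powr (?a - 1)" for y
    unfolding cQ_def using Vb_nonneg by simp
  have "(\<integral>\<^sup>+y. ennreal (indicator {0..s} y * (cQ * y powr (?a - 1))) \<partial>lborel) = ennreal (s powr ?a * Vb)"
    by (rule nn_integral_has_integral_lebesgue[OF _ I]) (use nn in auto)
  moreover have "dQ y * indicator {..s} y = ennreal (indicator {0..s} y * (cQ * y powr (?a - 1)))" for y
    unfolding dQ_def by (cases "y = 0") (auto simp: indicator_def)
  ultimately show ?thesis by simp
qed


lemma sets_borel_atMost: "sets (borel :: real measure) = sigma_sets UNIV (range atMost)"
  by (subst borel_eq_atMost) (rule sets_measure_of, simp)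

lemma Qf_level0: "t \<le> 0 \<Longrightarrow> emeasure lborel {x. Qf x \<le> t} = 0"
proof -
  assume t: "t \<le> 0"
  have sub: "{x. Qf x \<le> t} \<subseteq> {\<mu>0}"
  proof
    fix x assume "x \<in> {x. Qf x \<le> t}"
    then have "Qf x \<le> 0" using t by simp
    then have "Qf x = 0" using Qf_nonneg[of x] by linarith
    then show "x \<in> {\<mu>0}" using Qf_eq0 by simp
  qed
  have "emeasure lborel {x. Qf x \<le> t} \<le> emeasure lborel {\<mu>0}"
    by (rule emeasure_mono[OF sub]) simp
  then show ?thesis by simp
qed

lemma distr_Qf: "distr lborel borel Qf = density lborel dQ"
proof (rule measure_eqI_generator_eq[where E="range atMost" and \<Omega>=UNIV and A="\<lambda>i. {..real i}"])
  show "Int_stable (range atMost :: real set set)"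
  proof (unfold Int_stable_def, intro ballI)
    fix X Y :: "real set" assume "X \<in> range atMost" "Y \<in> range atMost"
    then obtain a b where "X = {..a}" "Y = {..b}" by blast
    then have "X \<inter> Y = {..min a b}" by auto
    then show "X \<inter> Y \<in> range atMost" by blast
  qed
  show "range atMost \<subseteq> Pow (UNIV :: real set)" by simp
  show "sets (distr lborel borel Qf) = sigma_sets UNIV (range atMost)"
    using sets_borel_atMost by simp
  show "sets (density lborel dQ) = sigma_sets UNIV (range atMost)"
    using sets_borel_atMost by simp
  have em: "emeasure (distr lborel borel Qf) {..s} = emeasure lborel {x. Qf x \<le> s}" for s
    by (simp add: emeasure_distr vimage_def)
  show "emeasure (distr lborel borel Qf) X = emeasure (density lborel dQ) X" if "X \<in> range atMost" for X
  proof -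
    obtain s where X: "X = {..s}" using \<open>X \<in> range atMost\<close> by blast
    show ?thesis
    proof (cases "0 < s")
      case True
      then show ?thesis unfolding X em
        by (simp add: Qf_level emeasure_density dQ_int)
    next
      case False
      have z0: "dQ y * indicator {..s} y = 0" for y
        using False unfolding dQ_def by (auto simp: indicator_def)
      have z: "(\<integral>\<^sup>+y. dQ y * indicator {..s} y \<partial>lborel) = 0"
        by (simp only: z0) simp
      have "emeasure (density lborel dQ) {..s} = 0"
        by (simp add: emeasure_density z)
      then show ?thesis unfolding X em using False
        by (simp add: Qf_level0)
    qed
  qed
  show "range (\<lambda>i::nat. {..real i}) \<subseteq> range atMost" by auto
  show "(\<Union>i::nat. {..real i}) = UNIV"
    by (auto simp: real_arch_simple)
  show "emeasure (distr lborel borel Qf) {..real i} \<noteq> \<infinity>" for i :: nat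
    by (cases "i = 0") (simp_all add: em Qf_level Qf_level0)
qed


lemma g0_ind_meas[measurable]: "(\<lambda>s. indicator {0<..} s * g0 s) \<in> borel_measurable borel"
  using gcl unfolding Gbar_class_def G_class_def set_borel_measurable_def by simp

lemma g0_int: "((\<lambda>t. t powr (real CARD('m) / 2 - 1) * g0 t) has_integral delta_m CARD('m)) {0<..}"
  using gcl unfolding Gbar_class_def G_class_def by simp

abbreviation "rho \<equiv> RES_density \<mu>0 (Sig \<xi>0) g0"

lemma rho_ae: "x \<noteq> \<mu>0 \<Longrightarrow> ennreal (rho x) = ennreal P0c * ennreal (indicator {0<..} (Qf x) * g0 (Qf x))"
proof -
  assume x: "x \<noteq> \<mu>0"
  have q: "0 < Qf x" using Qf_pos[OF x] .
  then have "0 < g0 (Qf x)" using gpos by blast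
  then show ?thesis using q P0c_pos by (simp add: RES_density_def ennreal_mult)
qed

lemma rho_nonneg: "x \<noteq> \<mu>0 \<Longrightarrow> 0 \<le> rho x"
  using Qf_pos[of x] P0c_pos gpos by (simp add: RES_density_def less_imp_le)

lemma rho_meas[measurable]: "rho \<in> borel_measurable borel"
proof -
  have "rho = (\<lambda>x. if x = \<mu>0 then rho \<mu>0 else P0c * (indicator {0<..} (Qf x) * g0 (Qf x)))"
    using Qf_pos by (auto simp: fun_eq_iff RES_density_def)
  also have "\<dots> \<in> borel_measurable borel" by measurable
  finally show ?thesis .
qed

lemma P0_finite: "emeasure (RES \<mu>0 (Sig \<xi>0) g0) UNIV < \<infinity>"
proof -
  let ?h = "\<lambda>s. indicator {0<..} s * g0 s"
  have "emeasure (RES \<mu>0 (Sig \<xi>0) g0) UNIV = (\<integral>\<^sup>+x. ennreal (rho x) \<partial>lborel)"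
    unfolding RES_def by (simp add: emeasure_density)
  also have "\<dots> = (\<integral>\<^sup>+x. ennreal P0c * ennreal (?h (Qf x)) \<partial>lborel)"
    by (rule nn_integral_cong_AE) (use AE_lborel_singleton[of \<mu>0] rho_ae in auto)
  also have "\<dots> = ennreal P0c * (\<integral>\<^sup>+x. ennreal (?h (Qf x)) \<partial>lborel)"
    by (rule nn_integral_cmult) measurable
  also have "(\<integral>\<^sup>+x. ennreal (?h (Qf x)) \<partial>lborel) = (\<integral>\<^sup>+s. ennreal (?h s) \<partial>distr lborel borel Qf)"
    by (rule nn_integral_distr[symmetric]) measurable
  also have "\<dots> = (\<integral>\<^sup>+s. dQ s * ennreal (?h s) \<partial>lborel)"
    unfolding distr_Qf by (rule nn_integral_density) measurable
  also have "\<dots> = (\<integral>\<^sup>+s. ennreal (indicator {0<..} s * (cQ * (s powr (real CARD('m) / 2 - 1) * g0 s))) \<partial>lborel)"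
  proof (rule nn_integral_cong)
    fix s :: real
    show "dQ s * ennreal (?h s) = ennreal (indicator {0<..} s * (cQ * (s powr (real CARD('m) / 2 - 1) * g0 s)))"
    proof (cases "0 < s")
      case True
      have a: "0 \<le> cQ * s powr (real CARD('m) / 2 - 1)" using Vb_nonneg unfolding cQ_def by simp
      have b: "0 \<le> g0 s" using gpos True by (simp add: less_imp_le)
      show ?thesis unfolding dQ_def using True ennreal_mult[OF a b] by (simp add: mult.assoc)
    next
      case False
      then show ?thesis unfolding dQ_def by simp
    qed
  qed
  also have "\<dots> = ennreal (cQ * delta_m CARD('m))"
  proof (rule nn_integral_has_integral_lebesgue)
    show "((\<lambda>s. cQ * (s powr (real CARD('m) / 2 - 1) * g0 s)) has_integral cQ * delta_m CARD('m)) {0<..}"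
      by (rule has_integral_mult_right[OF g0_int])
    show "0 \<le> cQ * (s powr (real CARD('m) / 2 - 1) * g0 s)" if "s \<in> {0<..}" for s
    proof -
      have "0 \<le> g0 s" using that gpos by (simp add: less_imp_le)
      then show ?thesis using Vb_nonneg unfolding cQ_def by simp
    qed
  qed
  finally show ?thesis by (simp add: ennreal_mult_less_top)
qed

end

context RESsetup begin

abbreviation "P0m \<equiv> RES \<mu>0 (Sig \<xi>0) g0"
definition "Tr x = (2::real) *\<^sub>R \<mu>0 - x"

lemma Tr_meas[measurable]: "Tr \<in> borel_measurable borel"
  unfolding Tr_def by measurable

lemma Tr_sub: "Tr x - \<mu>0 = - (x - \<mu>0)"
  unfolding Tr_def by (simp add: algebra_simps scaleR_2)

lemma Tr_ne: "x \<noteq> \<mu>0 \<Longrightarrow> Tr x \<noteq> \<mu>0"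
  using Tr_sub[of x] by auto

lemma Qf_Tr: "Qf (Tr x) = Qf x"
  unfolding mahal_def Tr_sub by (simp only: vec.neg inner_minus_left inner_minus_right minus_minus)

lemma rho_Tr: "rho (Tr x) = rho x"
  unfolding RES_density_def using Qf_Tr by simp

lemma sets_P0[simp]: "sets P0m = sets borel"
  unfolding RES_def by simp

lemma space_P0[simp]: "space P0m = UNIV"
  unfolding RES_def by simp

lemma meas_P0: "borel_measurable P0m = borel_measurable borel"
  by (rule measurable_cong_sets) simp_all

lemma lborel_Tr: "distr lborel borel Tr = lborel"
proof -
  have c: "(-1::real) \<noteq> 0" by simp
  have "lborel = density (distr lborel borel (\<lambda>x. (2::real) *\<^sub>R \<mu>0 + (-1) *\<^sub>R x)) (\<lambda>_. ennreal (\<bar>-1::real\<bar> ^ DIM(real^'m)))"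
    using lborel_affine[OF c, of "(2::real) *\<^sub>R \<mu>0"] by simp
  also have "(\<lambda>x. (2::real) *\<^sub>R \<mu>0 + (-1) *\<^sub>R x) = Tr" by (simp add: fun_eq_iff Tr_def)
  finally have L: "lborel = density (distr lborel borel Tr) (\<lambda>_. 1)" by simp
  show ?thesis by (rule sym, rule trans[OF L density_1])
qed

lemma P0_Tr: "distr P0m borel Tr = P0m"
proof -
  have "density (distr lborel borel Tr) (\<lambda>x. ennreal (rho x)) = distr (density lborel (\<lambda>x. ennreal (rho (Tr x)))) borel Tr"
    by (rule density_distr) measurable
  then have "density lborel (\<lambda>x. ennreal (rho x)) = distr (density lborel (\<lambda>x. ennreal (rho x))) borel Tr"
    unfolding lborel_Tr rho_Tr .
  then show ?thesis unfolding RES_def by simp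
qed

lemma AE_lborel_P0: "(AE x in lborel. P x) \<Longrightarrow> (AE x in P0m. P x)"
  unfolding RES_def by (subst AE_density) (measurable, auto elim: AE_mp)

lemma AE_ne: "AE x in P0m. x \<noteq> \<mu>0"
  by (rule AE_lborel_P0[OF AE_lborel_singleton])

lemma odd_integral:
  fixes f :: "real^'m \<Rightarrow> real"
  assumes f: "f \<in> borel_measurable borel" and odd: "AE x in P0m. f (Tr x) = - f x"
  shows "integral\<^sup>L P0m f = 0"
proof -
  have fm: "f \<in> borel_measurable P0m" unfolding meas_P0 by (rule f)
  have Tm: "Tr \<in> P0m \<rightarrow>\<^sub>M borel" unfolding meas_P0 by (rule Tr_meas)
  have "integral\<^sup>L P0m f = integral\<^sup>L (distr P0m borel Tr) f" using P0_Tr by simp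
  also have "\<dots> = integral\<^sup>L P0m (\<lambda>x. f (Tr x))" by (rule integral_distr[OF Tm f])
  also have "\<dots> = integral\<^sup>L P0m (\<lambda>x. - f x)"
    by (rule integral_cong_AE) (use fm Tm odd measurable_compose[OF Tm f] in auto)
  also have "\<dots> = - integral\<^sup>L P0m f" by simp
  finally show ?thesis by simp
qed

definition "\<kappa>' q = (if q \<in> {0<..} then \<kappa> q else 0)"

lemma kappa'_meas[measurable]: "\<kappa>' \<in> borel_measurable borel"
proof -
  have "continuous_on {0<..} \<kappa>"
    unfolding \<kappa>_def[abs_def]
    by (rule continuous_on_divide[OF deriv_g0_cont g0_cont]) (use gpos in auto)
  then show ?thesis unfolding \<kappa>'_def[abs_def]
    by (rule borel_measurable_continuous_on_if[OF _ _ continuous_on_const, rotated]) simp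
qed

lemma kappa_eq: "x \<noteq> \<mu>0 \<Longrightarrow> \<kappa> (Qf x) = \<kappa>' (Qf x)"
  using Qf_pos by (simp add: \<kappa>'_def)

abbreviation "sg x \<equiv> fst (score mu Sig g0 (\<gamma>0, \<xi>0) x)"
abbreviation "sx x \<equiv> snd (score mu Sig g0 (\<gamma>0, \<xi>0) x)"

lemma Lg_meas[measurable]: "(\<lambda>d. Lg i d) \<in> borel_measurable borel"
  unfolding Lg_def by measurable

lemma Lx_meas[measurable]: "(\<lambda>d. Lx j d) \<in> borel_measurable borel"
  unfolding Lx_def by measurable

lemma sg_meas[measurable]: "(\<lambda>x. sg x $ i) \<in> borel_measurable borel"
proof -
  have "(\<lambda>x. sg x $ i) = (\<lambda>x. if x \<in> {\<mu>0} then sg \<mu>0 $ i else \<kappa>' (Qf x) * Lg i (x - \<mu>0))"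
    using score_fst kappa_eq by (auto simp: fun_eq_iff)
  also have "\<dots> \<in> borel_measurable borel" by measurable
  finally show ?thesis .
qed

lemma sx_meas[measurable]: "(\<lambda>x. sx x $ j) \<in> borel_measurable borel"
proof -
  have "(\<lambda>x. sx x $ j) = (\<lambda>x. if x \<in> {\<mu>0} then sx \<mu>0 $ j else \<kappa>' (Qf x) * Lx j (x - \<mu>0) + \<beta> j)"
    using score_snd kappa_eq by (auto simp: fun_eq_iff)
  also have "\<dots> \<in> borel_measurable borel" by measurable
  finally show ?thesis .
qed

lemma Lg_odd: "Lg i (- d) = - Lg i d"
  unfolding Lg_def by (simp add: sum_negf[symmetric] algebra_simps)

lemma Lx_even: "Lx j (- d) = Lx j d"
  unfolding Lx_def by simp

lemma sg_Tr: "x \<noteq> \<mu>0 \<Longrightarrow> sg (Tr x) $ i = - sg x $ i"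
  using score_fst[of x] score_fst[OF Tr_ne, of x] Lg_odd[of i "x - \<mu>0"] by (simp add: Tr_sub Qf_Tr)

lemma sx_Tr: "x \<noteq> \<mu>0 \<Longrightarrow> sx (Tr x) $ j = sx x $ j"
  using score_snd[of x] score_snd[OF Tr_ne, of x] Lx_even[of j "x - \<mu>0"] by (simp add: Tr_sub Qf_Tr)

end

lemma bound1:
  fixes d :: "real^'n"
  shows "\<bar>\<Sum>a\<in>UNIV. \<Sum>b\<in>UNIV. d$a * A a b + B a b * (C a b * d$b)\<bar>
     \<le> (\<Sum>a\<in>UNIV. \<Sum>b\<in>UNIV. \<bar>A a b\<bar> + \<bar>B a b\<bar> * \<bar>C a b\<bar>) * norm d"
proof -
  have t: "\<bar>d$a * A a b + B a b * (C a b * d$b)\<bar> \<le> (\<bar>A a b\<bar> + \<bar>B a b\<bar> * \<bar>C a b\<bar>) * norm d" for a b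
  proof -
    have "\<bar>d$a * A a b + B a b * (C a b * d$b)\<bar> \<le> \<bar>d$a\<bar> * \<bar>A a b\<bar> + \<bar>B a b\<bar> * \<bar>C a b\<bar> * \<bar>d$b\<bar>"
      by (simp add: abs_mult mult.assoc abs_triangle_ineq[THEN order_trans])
    also have "\<dots> \<le> norm d * \<bar>A a b\<bar> + \<bar>B a b\<bar> * \<bar>C a b\<bar> * norm d"
      by (intro add_mono mult_right_mono mult_left_mono component_le_norm_cart) simp_all
    finally show ?thesis by (simp add: algebra_simps)
  qed
  have "\<bar>\<Sum>a\<in>UNIV. \<Sum>b\<in>UNIV. d$a * A a b + B a b * (C a b * d$b)\<bar>
      \<le> (\<Sum>a\<in>UNIV. \<Sum>b\<in>UNIV. \<bar>d$a * A a b + B a b * (C a b * d$b)\<bar>)"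
    by (rule order_trans[OF sum_abs sum_mono[OF sum_abs]])
  also have "\<dots> \<le> (\<Sum>a\<in>UNIV. \<Sum>b\<in>UNIV. (\<bar>A a b\<bar> + \<bar>B a b\<bar> * \<bar>C a b\<bar>) * norm d)"
    by (intro sum_mono t)
  also have "\<dots> = (\<Sum>a\<in>UNIV. \<Sum>b\<in>UNIV. \<bar>A a b\<bar> + \<bar>B a b\<bar> * \<bar>C a b\<bar>) * norm d"
    by (simp add: sum_distrib_right)
  finally show ?thesis .
qed

lemma bound2:
  fixes d :: "real^'n"
  shows "\<bar>\<Sum>a\<in>UNIV. \<Sum>b\<in>UNIV. d$a * (M a b * d$b)\<bar> \<le> (\<Sum>a\<in>UNIV. \<Sum>b\<in>UNIV. \<bar>M a b\<bar>) * (norm d)^2"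
proof -
  have t: "\<bar>d$a * (M a b * d$b)\<bar> \<le> \<bar>M a b\<bar> * (norm d)^2" for a b
  proof -
    have "\<bar>d$a * (M a b * d$b)\<bar> = \<bar>M a b\<bar> * (\<bar>d$a\<bar> * \<bar>d$b\<bar>)" by (simp add: abs_mult)
    also have "\<dots> \<le> \<bar>M a b\<bar> * (norm d * norm d)"
      by (intro mult_left_mono mult_mono component_le_norm_cart) simp_all
    finally show ?thesis by (simp add: power2_eq_square)
  qed
  have "\<bar>\<Sum>a\<in>UNIV. \<Sum>b\<in>UNIV. d$a * (M a b * d$b)\<bar> \<le> (\<Sum>a\<in>UNIV. \<Sum>b\<in>UNIV. \<bar>d$a * (M a b * d$b)\<bar>)"
    by (rule order_trans[OF sum_abs sum_mono[OF sum_abs]])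
  also have "\<dots> \<le> (\<Sum>a\<in>UNIV. \<Sum>b\<in>UNIV. \<bar>M a b\<bar> * (norm d)^2)"
    by (intro sum_mono t)
  also have "\<dots> = (\<Sum>a\<in>UNIV. \<Sum>b\<in>UNIV. \<bar>M a b\<bar>) * (norm d)^2"
    by (simp add: sum_distrib_right)
  finally show ?thesis .
qed

lemma sq_bound: "\<bar>a\<bar> \<le> b \<Longrightarrow> a^2 \<le> (b::real)^2"
  by (metis abs_ge_zero order_trans power2_abs power_mono)

lemma integrable_prod_sq:
  fixes f g :: "'a \<Rightarrow> real"
  assumes "integrable M (\<lambda>x. (f x)^2)" "integrable M (\<lambda>x. (g x)^2)"
    and "f \<in> borel_measurable M" "g \<in> borel_measurable M"
  shows "integrable M (\<lambda>x. f x * g x)"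
proof (rule Bochner_Integration.integrable_bound[OF Bochner_Integration.integrable_add[OF assms(1,2)]])
  show "(\<lambda>x. f x * g x) \<in> borel_measurable M" using assms(3,4) by measurable
  show "AE x in M. norm (f x * g x) \<le> norm ((f x)^2 + (g x)^2)"
  proof (rule AE_I2)
    fix x
    have "0 \<le> (\<bar>f x\<bar> - \<bar>g x\<bar>)^2" by simp
    then have "2 * \<bar>f x\<bar> * \<bar>g x\<bar> \<le> (f x)^2 + (g x)^2" by (simp add: power2_eq_square algebra_simps)
    moreover have "0 \<le> \<bar>f x\<bar> * \<bar>g x\<bar>" by simp
    ultimately have "\<bar>f x\<bar> * \<bar>g x\<bar> \<le> (f x)^2 + (g x)^2" by linarith
    then show "norm (f x * g x) \<le> norm ((f x)^2 + (g x)^2)"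
      by (simp add: abs_mult)
  qed
qed

locale RESfull = RESsetup \<Gamma> \<Psi> mu Sig g0 \<gamma>0 \<xi>0
  for \<Gamma> :: "(real^'q) set" and \<Psi> :: "(real^'r) set"
    and mu :: "real^'q \<Rightarrow> real^'m" and Sig :: "real^'r \<Rightarrow> real^'m^'m"
    and g0 :: "real \<Rightarrow> real" and \<gamma>0 :: "real^'q" and \<xi>0 :: "real^'r" +
  assumes P4b: "integrable (RES (mu \<gamma>0) (Sig \<xi>0) g0) (\<lambda>x. (mahal (mu \<gamma>0) (Sig \<xi>0) x)\<^sup>2 * (- 2 * deriv g0 (mahal (mu \<gamma>0) (Sig \<xi>0) x) / g0 (mahal (mu \<gamma>0) (Sig \<xi>0) x))\<^sup>2)"
    and P4c: "integrable (RES (mu \<gamma>0) (Sig \<xi>0) g0) (\<lambda>x. mahal (mu \<gamma>0) (Sig \<xi>0) x * (- 2 * deriv g0 (mahal (mu \<gamma>0) (Sig \<xi>0) x) / g0 (mahal (mu \<gamma>0) (Sig \<xi>0) x))\<^sup>2)"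
begin

lemma phi_kappa: "(- 2 * deriv g0 q / g0 q)^2 = 4 * (\<kappa> q)^2"
  unfolding \<kappa>_def by (simp add: power2_eq_square field_simps)

lemma phi_kappa': "(2 * deriv g0 q / g0 q)^2 = 4 * (\<kappa> q)^2"
  unfolding \<kappa>_def by (simp add: power2_eq_square field_simps)

lemma P4b': "integrable P0m (\<lambda>x. (Qf x)^2 * (\<kappa> (Qf x))^2)"
proof -
  have "integrable P0m (\<lambda>x. (1/4) * ((Qf x)\<^sup>2 * (- 2 * deriv g0 (Qf x) / g0 (Qf x))\<^sup>2))"
    using integrable_mult_right[OF P4b] .
  then show ?thesis by (simp add: phi_kappa phi_kappa')
qed

lemma P4c': "integrable P0m (\<lambda>x. Qf x * (\<kappa> (Qf x))^2)"
proof -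
  have "integrable P0m (\<lambda>x. (1/4) * (Qf x * (- 2 * deriv g0 (Qf x) / g0 (Qf x))\<^sup>2))"
    using integrable_mult_right[OF P4c] .
  then show ?thesis by (simp add: phi_kappa phi_kappa')
qed

lemma coerc: "\<exists>c>0. \<forall>x. c * (norm (x - \<mu>0))^2 \<le> Qf x"
  using quad_coercive[OF pdN0] unfolding mahal_def by blast

lemma finP0: "finite_measure P0m"
  by (rule finite_measureI) (use P0_finite in simp)

lemma sg_L2: "integrable P0m (\<lambda>x. (sg x $ i)^2)"
proof -
  obtain c where c: "c > 0" "\<forall>x. c * (norm (x - \<mu>0))^2 \<le> Qf x" using coerc by blast
  define Cg where "Cg = (\<Sum>a\<in>UNIV. \<Sum>b\<in>UNIV. \<bar>N0 $ a $ b * (- Dmu (axis i 1) $ b)\<bar> + \<bar>- Dmu (axis i 1) $ a\<bar> * \<bar>N0 $ a $ b\<bar>)"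
  have Lgb: "\<bar>Lg i d\<bar> \<le> Cg * norm d" for d
    unfolding Lg_def Cg_def by (rule bound1)
  have Cg0: "0 \<le> Cg" unfolding Cg_def by (intro sum_nonneg) simp
  show ?thesis
  proof (rule Bochner_Integration.integrable_bound[OF integrable_mult_right[OF P4c', of "Cg^2 / c"]])
    show "(\<lambda>x. (sg x $ i)^2) \<in> borel_measurable P0m" unfolding meas_P0 by measurable
    show "AE x in P0m. norm ((sg x $ i)^2) \<le> norm (Cg^2 / c * (Qf x * (\<kappa> (Qf x))^2))"
      using AE_ne
    proof (rule AE_mp, intro AE_I2 impI)
      fix x assume x: "x \<noteq> \<mu>0"
      have "(Lg i (x - \<mu>0))^2 \<le> (Cg * norm (x - \<mu>0))^2" by (rule sq_bound[OF Lgb])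
      also have "\<dots> = Cg^2 * (norm (x - \<mu>0))^2" by (simp add: power_mult_distrib)
      also have "\<dots> \<le> Cg^2 * (Qf x / c)"
        using c by (intro mult_left_mono) (simp_all add: le_divide_eq mult.commute)
      finally have L: "(Lg i (x - \<mu>0))^2 \<le> Cg^2 / c * Qf x" by simp
      have "(sg x $ i)^2 = (\<kappa> (Qf x))^2 * (Lg i (x - \<mu>0))^2"
        using score_fst[OF x] by (simp add: power_mult_distrib)
      also have "\<dots> \<le> (\<kappa> (Qf x))^2 * (Cg^2 / c * Qf x)"
        by (rule mult_left_mono[OF L]) simp
      finally have "(sg x $ i)^2 \<le> Cg^2 / c * (Qf x * (\<kappa> (Qf x))^2)" by (simp add: algebra_simps)
      moreover have nn: "0 \<le> Cg^2 / c * (Qf x * (\<kappa> (Qf x))^2)"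
        using c Qf_nonneg[of x] by simp
      ultimately show "norm ((sg x $ i)^2) \<le> norm (Cg^2 / c * (Qf x * (\<kappa> (Qf x))^2))"
        by (simp only: real_norm_def abs_of_nonneg[OF nn] abs_power2)
    qed
  qed
qed

lemma sx_L2: "integrable P0m (\<lambda>x. (sx x $ j)^2)"
proof -
  interpret fm: finite_measure P0m by (rule finP0)
  obtain c where c: "c > 0" "\<forall>x. c * (norm (x - \<mu>0))^2 \<le> Qf x" using coerc by blast
  define Cx where "Cx = (\<Sum>a\<in>UNIV. \<Sum>b\<in>UNIV. \<bar>Dn a b (axis j 1)\<bar>)"
  have Lxb: "\<bar>Lx j d\<bar> \<le> Cx * (norm d)^2" for d
    unfolding Lx_def Cx_def by (rule bound2)
  have Cx0: "0 \<le> Cx" unfolding Cx_def by (intro sum_nonneg) simp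
  let ?K = "2 * (Cx / c)^2"
  show ?thesis
  proof (rule Bochner_Integration.integrable_bound[OF Bochner_Integration.integrable_add[OF integrable_mult_right[OF P4b', of ?K] fm.integrable_const[of "2 * (\<beta> j)^2"]]])
    show "(\<lambda>x. (sx x $ j)^2) \<in> borel_measurable P0m" unfolding meas_P0 by measurable
    show "AE x in P0m. norm ((sx x $ j)^2) \<le> norm (?K * ((Qf x)^2 * (\<kappa> (Qf x))^2) + 2 * (\<beta> j)^2)"
      using AE_ne
    proof (rule AE_mp, intro AE_I2 impI)
      fix x assume x: "x \<noteq> \<mu>0"
      have n2: "(norm (x - \<mu>0))^2 \<le> Qf x / c" using c by (simp add: le_divide_eq mult.commute)
      have "\<bar>Lx j (x - \<mu>0)\<bar> \<le> Cx * (Qf x / c)"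
        using Lxb[of "x - \<mu>0"] mult_left_mono[OF n2 Cx0] by linarith
      then have L: "(Lx j (x - \<mu>0))^2 \<le> (Cx / c)^2 * (Qf x)^2"
      proof -
        have "(Lx j (x - \<mu>0))^2 \<le> (Cx * (Qf x / c))^2" by (rule sq_bound) fact
        then show ?thesis by (simp add: power_mult_distrib power_divide)
      qed
      have "(sx x $ j)^2 = (\<kappa> (Qf x) * Lx j (x - \<mu>0) + \<beta> j)^2" using score_snd[OF x] by simp
      also have "\<dots> \<le> 2 * (\<kappa> (Qf x) * Lx j (x - \<mu>0))^2 + 2 * (\<beta> j)^2"
      proof -
        have "0 \<le> (\<kappa> (Qf x) * Lx j (x - \<mu>0) - \<beta> j)^2" by simp
        then show ?thesis by (simp add: power2_eq_square algebra_simps)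
      qed
      also have "\<dots> = 2 * ((\<kappa> (Qf x))^2 * (Lx j (x - \<mu>0))^2) + 2 * (\<beta> j)^2"
        by (simp add: power_mult_distrib)
      also have "\<dots> \<le> 2 * ((\<kappa> (Qf x))^2 * ((Cx / c)^2 * (Qf x)^2)) + 2 * (\<beta> j)^2"
        using mult_left_mono[OF L, of "(\<kappa> (Qf x))^2"] by simp
      finally have "(sx x $ j)^2 \<le> ?K * ((Qf x)^2 * (\<kappa> (Qf x))^2) + 2 * (\<beta> j)^2"
        by (simp add: algebra_simps)
      moreover have nn: "0 \<le> ?K * ((Qf x)^2 * (\<kappa> (Qf x))^2) + 2 * (\<beta> j)^2" by simp
      ultimately show "norm ((sx x $ j)^2) \<le> norm (?K * ((Qf x)^2 * (\<kappa> (Qf x))^2) + 2 * (\<beta> j)^2)"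
        by (simp only: real_norm_def abs_of_nonneg[OF nn] abs_power2)
    qed
  qed
qed

end

context RESfull begin

abbreviation "Sset \<equiv> fun_set_plus (span_comp (\<lambda>x. sx x)) (T_c P0m Qf)"

lemma S_elem:
  assumes "f \<in> Sset"
  obtains c h \<phi> where "f = (\<lambda>x. c \<bullet> sx x + h x)" "h \<in> borel_measurable P0m"
    "integrable P0m (\<lambda>x. (h x)^2)" "\<phi> \<in> borel_measurable borel" "AE x in P0m. h x = \<phi> (Qf x)"
  using assms unfolding fun_set_plus_def span_comp_def T_c_def T_u_def L2_0_def by blast

lemma csx_meas[measurable]: "(\<lambda>x. c \<bullet> sx x) \<in> borel_measurable borel"
  unfolding inner_vec_def by measurable

lemma csx_L2: "integrable P0m (\<lambda>x. (c \<bullet> sx x)^2)"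
proof -
  have I: "integrable P0m (\<lambda>x. (c \<bullet> c) * (\<Sum>j\<in>UNIV. (sx x $ j)^2))"
    by (intro integrable_mult_right Bochner_Integration.integrable_sum sx_L2)
  show ?thesis
proof (rule Bochner_Integration.integrable_bound[OF I])
  show "(\<lambda>x. (c \<bullet> sx x)^2) \<in> borel_measurable P0m" unfolding meas_P0 by measurable
  show "AE x in P0m. norm ((c \<bullet> sx x)^2) \<le> norm ((c \<bullet> c) * (\<Sum>j\<in>UNIV. (sx x $ j)^2))"
  proof (rule AE_I2)
    fix x
    have e: "sx x \<bullet> sx x = (\<Sum>j\<in>UNIV. (sx x $ j)^2)" by (simp add: inner_vec_def power2_eq_square)
    have "(c \<bullet> sx x)^2 \<le> (c \<bullet> c) * (\<Sum>j\<in>UNIV. (sx x $ j)^2)"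
      using Cauchy_Schwarz_ineq[of c "sx x"] e by simp
    moreover have nn: "0 \<le> (c \<bullet> c) * (\<Sum>j\<in>UNIV. (sx x $ j)^2)" by (simp add: sum_nonneg)
    ultimately show "norm ((c \<bullet> sx x)^2) \<le> norm ((c \<bullet> c) * (\<Sum>j\<in>UNIV. (sx x $ j)^2))"
      by (simp only: real_norm_def abs_of_nonneg[OF nn] abs_power2)
  qed
qed
qed

lemma sx_Tr_vec: "x \<noteq> \<mu>0 \<Longrightarrow> sx (Tr x) = sx x"
  using sx_Tr by (simp add: vec_eq_iff)

lemma orth:
  assumes "f \<in> Sset"
  shows "integral\<^sup>L P0m (\<lambda>x. sg x $ i * f x) = 0"
proof -
  obtain c h \<phi> where f: "f = (\<lambda>x. c \<bullet> sx x + h x)" and hm: "h \<in> borel_measurable P0m"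
    and \<phi>m[measurable]: "\<phi> \<in> borel_measurable borel" and ae: "AE x in P0m. h x = \<phi> (Qf x)"
    using S_elem[OF assms] by blast
  have "integral\<^sup>L P0m (\<lambda>x. sg x $ i * f x) = integral\<^sup>L P0m (\<lambda>x. sg x $ i * (c \<bullet> sx x + \<phi> (Qf x)))"
  proof (rule integral_cong_AE)
    show "(\<lambda>x. sg x $ i * f x) \<in> borel_measurable P0m"
      unfolding f using hm by (simp add: meas_P0) measurable
    show "(\<lambda>x. sg x $ i * (c \<bullet> sx x + \<phi> (Qf x))) \<in> borel_measurable P0m"
      unfolding meas_P0 by measurable
    show "AE x in P0m. sg x $ i * f x = sg x $ i * (c \<bullet> sx x + \<phi> (Qf x))"
      using ae unfolding f by eventually_elim simp
  qed
  also have "\<dots> = 0"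
  proof (rule odd_integral)
    show "(\<lambda>x. sg x $ i * (c \<bullet> sx x + \<phi> (Qf x))) \<in> borel_measurable borel" by measurable
    show "AE x in P0m. sg (Tr x) $ i * (c \<bullet> sx (Tr x) + \<phi> (Qf (Tr x))) = - (sg x $ i * (c \<bullet> sx x + \<phi> (Qf x)))"
      using AE_ne by eventually_elim (simp add: sg_Tr sx_Tr_vec Qf_Tr)
  qed
  finally show ?thesis .
qed

lemma zero_in_S: "(\<lambda>x. 0) \<in> Sset"
proof -
  have z: "(\<lambda>x::real^'m. 0::real) \<in> T_c P0m Qf"
    unfolding T_c_def T_u_def L2_0_def by (auto intro!: exI[of _ "\<lambda>_. 0"])
  have "(\<lambda>x. (0::real^'r) \<bullet> sx x) \<in> span_comp (\<lambda>x. sx x)" unfolding span_comp_def by blast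
  then have "(\<lambda>x. (0::real^'r) \<bullet> sx x + 0) \<in> Sset" using z unfolding fun_set_plus_def
    by (intro CollectI exI[of _ "\<lambda>x. (0::real^'r) \<bullet> sx x"] exI[of _ "\<lambda>x. 0"]) simp
  then show ?thesis by simp
qed

lemma proj_zero:
  assumes pr: "is_orth_proj P0m Sset (\<lambda>y. sg y $ i) p"
  shows "p \<in> borel_measurable P0m" "AE x in P0m. p x = 0"
proof -
  have pS: "p \<in> Sset" and po: "\<forall>f\<in>Sset. integral\<^sup>L P0m (\<lambda>x. (sg x $ i - p x) * f x) = 0"
    using pr unfolding is_orth_proj_def by auto
  obtain c h \<phi> where f: "p = (\<lambda>x. c \<bullet> sx x + h x)" and hm: "h \<in> borel_measurable P0m"
    and h2: "integrable P0m (\<lambda>x. (h x)^2)"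
    using S_elem[OF pS] by blast
  have cm: "(\<lambda>x. c \<bullet> sx x) \<in> borel_measurable P0m" unfolding meas_P0 by measurable
  show pm: "p \<in> borel_measurable P0m" unfolding f using hm cm by measurable
  have sgm: "(\<lambda>x. sg x $ i) \<in> borel_measurable P0m" unfolding meas_P0 by measurable
  have p2: "integrable P0m (\<lambda>x. (p x)^2)"
  proof (rule Bochner_Integration.integrable_bound[OF Bochner_Integration.integrable_add[OF
        integrable_mult_right[OF csx_L2, of 2 c] integrable_mult_right[OF h2, of 2]]])
    show "(\<lambda>x. (p x)^2) \<in> borel_measurable P0m" using pm by measurable
    show "AE x in P0m. norm ((p x)^2) \<le> norm (2 * (c \<bullet> sx x)^2 + 2 * (h x)^2)"
    proof (rule AE_I2)
      fix x
      have "0 \<le> (c \<bullet> sx x - h x)^2" by simp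
      then have "(p x)^2 \<le> 2 * (c \<bullet> sx x)^2 + 2 * (h x)^2"
        unfolding f by (simp add: power2_eq_square algebra_simps)
      moreover have nn: "0 \<le> 2 * (c \<bullet> sx x)^2 + 2 * (h x)^2" by simp
      ultimately show "norm ((p x)^2) \<le> norm (2 * (c \<bullet> sx x)^2 + 2 * (h x)^2)"
        by (simp only: real_norm_def abs_of_nonneg[OF nn] abs_power2)
    qed
  qed
  have sp: "integrable P0m (\<lambda>x. sg x $ i * p x)"
    by (rule integrable_prod_sq[OF sg_L2 p2 sgm pm])
  have "integral\<^sup>L P0m (\<lambda>x. (sg x $ i - p x) * p x) = 0" using po pS by blast
  moreover have "integral\<^sup>L P0m (\<lambda>x. (sg x $ i - p x) * p x) = integral\<^sup>L P0m (\<lambda>x. sg x $ i * p x) - integral\<^sup>L P0m (\<lambda>x. (p x)^2)"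
    by (subst Bochner_Integration.integral_diff[OF sp p2, symmetric]) (simp add: algebra_simps power2_eq_square)
  moreover have "integral\<^sup>L P0m (\<lambda>x. sg x $ i * p x) = 0" by (rule orth[OF pS])
  ultimately have "integral\<^sup>L P0m (\<lambda>x. (p x)^2) = 0" by simp
  then have "AE x in P0m. (p x)^2 = 0" using integral_nonneg_eq_0_iff_AE[OF p2] by simp
  then show "AE x in P0m. p x = 0" by eventually_elim simp
qed

lemma proj_ok:
  "orth_proj P0m Sset (\<lambda>y. sg y $ i) \<in> borel_measurable P0m \<and> (AE x in P0m. orth_proj P0m Sset (\<lambda>y. sg y $ i) x = 0)"
proof -
  have "is_orth_proj P0m Sset (\<lambda>y. sg y $ i) (\<lambda>x. 0)"
    unfolding is_orth_proj_def using zero_in_S orth by simp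
  then have "is_orth_proj P0m Sset (\<lambda>y. sg y $ i) (orth_proj P0m Sset (\<lambda>y. sg y $ i))"
    unfolding orth_proj_def by (rule someI[where P = "is_orth_proj P0m Sset (\<lambda>y. sg y $ i)"])
  then show ?thesis using proj_zero by blast
qed

lemma cross_zero: "Emat P0m (\<lambda>x. sg x) (\<lambda>x. sx x) = 0"
proof -
  have "integral\<^sup>L P0m (\<lambda>x. sg x $ i * sx x $ j) = 0" for i j
  proof (rule odd_integral)
    show "(\<lambda>x. sg x $ i * sx x $ j) \<in> borel_measurable borel" by measurable
    show "AE x in P0m. sg (Tr x) $ i * sx (Tr x) $ j = - (sg x $ i * sx x $ j)"
      using AE_ne by eventually_elim (simp add: sg_Tr sx_Tr)
  qed
  then show ?thesis unfolding Emat_def by (simp add: vec_eq_iff)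
qed

lemma semi_eq:
  "Emat P0m (\<lambda>x. \<chi> i. sg x $ i - orth_proj P0m Sset (\<lambda>y. sg y $ i) x)
             (\<lambda>x. \<chi> i. sg x $ i - orth_proj P0m Sset (\<lambda>y. sg y $ i) x) = Emat P0m (\<lambda>x. sg x) (\<lambda>x. sg x)"
proof -
  let ?p = "\<lambda>i. orth_proj P0m Sset (\<lambda>y. sg y $ i)"
  have pm: "\<And>i. ?p i \<in> borel_measurable P0m" and pz: "\<And>i. AE x in P0m. ?p i x = 0"
    using proj_ok by blast+
  have sgm: "\<And>i. (\<lambda>x. sg x $ i) \<in> borel_measurable P0m" unfolding meas_P0 by measurable
  have "integral\<^sup>L P0m (\<lambda>x. (sg x $ i - ?p i x) * (sg x $ j - ?p j x)) = integral\<^sup>L P0m (\<lambda>x. sg x $ i * sg x $ j)" for i j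
  proof (rule integral_cong_AE)
    show "(\<lambda>x. (sg x $ i - ?p i x) * (sg x $ j - ?p j x)) \<in> borel_measurable P0m"
      using pm[of i] pm[of j] sgm[of i] sgm[of j] by measurable
    show "(\<lambda>x. sg x $ i * sg x $ j) \<in> borel_measurable P0m"
      using sgm[of i] sgm[of j] by measurable
    show "AE x in P0m. (sg x $ i - ?p i x) * (sg x $ j - ?p j x) = sg x $ i * sg x $ j"
      using pz[of i] pz[of j] by eventually_elim simp
  qed
  then show ?thesis unfolding Emat_def by (simp add: vec_eq_iff)
qed

lemma main:
  "let I\<gamma> = Emat P0m (\<lambda>x. sg x) (\<lambda>x. sg x); I\<gamma>\<xi> = Emat P0m (\<lambda>x. sg x) (\<lambda>x. sx x); I\<xi> = Emat P0m (\<lambda>x. sx x) (\<lambda>x. sx x);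
             Ibar_param = I\<gamma> - I\<gamma>\<xi> ** matrix_inv I\<xi> ** transpose I\<gamma>\<xi>;
             S = fun_set_plus (span_comp (\<lambda>x. sx x)) (T_c P0m Qf);
             sbar = (\<lambda>x. \<chi> i. sg x $ i - orth_proj P0m S (\<lambda>y. sg y $ i) x);
             Ibar_semi = Emat P0m sbar sbar
         in Ibar_semi = Ibar_param \<and> Ibar_param = I\<gamma>"
proof -
  have z: "(0::real^'r^'q) ** M ** transpose (0::real^'r^'q) = (0::real^'q^'q)" for M :: "real^'r^'r"
    by (simp add: vec_eq_iff matrix_matrix_mult_def transpose_def)
  show ?thesis unfolding Let_def cross_zero semi_eq z by simp
qed

end

theorem proposition5:
  fixes \<Gamma> :: "(real^'q) set" and \<Psi> :: "(real^'r) set"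
    and mu :: "real^'q \<Rightarrow> real^'m" and Sig :: "real^'r \<Rightarrow> real^'m^'m"
    and g0 :: "real \<Rightarrow> real" and \<gamma>0 :: "real^'q" and \<xi>0 :: "real^'r"
  defines "P0 \<equiv> RES (mu \<gamma>0) (Sig \<xi>0) g0"
    and "Q \<equiv> mahal (mu \<gamma>0) (Sig \<xi>0)"
    and "\<phi>0 \<equiv> (\<lambda>q. - 2 * deriv g0 q / g0 q)"
    and "s\<gamma> \<equiv> (\<lambda>x. fst (score mu Sig g0 (\<gamma>0, \<xi>0) x))"
    and "s\<xi> \<equiv> (\<lambda>x. snd (score mu Sig g0 (\<gamma>0, \<xi>0) x))"
  assumes open_params: "open \<Gamma>" "open \<Psi>"
    and diff: "mu differentiable_on \<Gamma>" "Sig differentiable_on \<Psi>"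
    and P1: "continuous_on \<Gamma> mu" "continuous_on \<Psi> Sig"
    and P2: "\<forall>\<gamma>\<in>\<Gamma>. \<forall>\<xi>\<in>\<Psi>. \<forall>D.
               ((\<lambda>\<theta>. (mu (fst \<theta>), Sig (snd \<theta>))) has_derivative D) (at (\<gamma>, \<xi>)) \<longrightarrow> inj D"
    and P3: "\<forall>\<xi>\<in>\<Psi>. sym_posdef (Sig \<xi>)"
    and truth: "\<gamma>0 \<in> \<Gamma>" "\<xi>0 \<in> \<Psi>"
    and g0_class: "Gbar_class CARD('m) g0"
    and g0_pos: "\<forall>t>0. 0 < g0 t"
    and g0_C1: "g0 C1_differentiable_on {0<..}"
    and g0_tail: "((\<lambda>q. q powr (real CARD('m) / 2 + 1) * g0 q) \<longlongrightarrow> 0) at_top"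
    and P4: "integrable P0 (\<lambda>x. (Q x)\<^sup>2)"
            "integrable P0 (\<lambda>x. (Q x)\<^sup>2 * (\<phi>0 (Q x))\<^sup>2)"
            "integrable P0 (\<lambda>x. Q x * (\<phi>0 (Q x))\<^sup>2)"
  shows "let I\<gamma> = Emat P0 s\<gamma> s\<gamma>; I\<gamma>\<xi> = Emat P0 s\<gamma> s\<xi>; I\<xi> = Emat P0 s\<xi> s\<xi>;
             Ibar_param = I\<gamma> - I\<gamma>\<xi> ** matrix_inv I\<xi> ** transpose I\<gamma>\<xi>;
             S = fun_set_plus (span_comp s\<xi>) (T_c P0 Q);
             sbar = (\<lambda>x. \<chi> i. s\<gamma> x $ i - orth_proj P0 S (\<lambda>y. s\<gamma> y $ i) x);
             Ibar_semi = Emat P0 sbar sbar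
         in Ibar_semi = Ibar_param \<and> Ibar_param = I\<gamma>"
proof -
  interpret R: RESfull \<Gamma> \<Psi> mu Sig g0 \<gamma>0 \<xi>0
  proof (unfold_locales)
    show "open \<Gamma>" "open \<Psi>" by (fact open_params)+
    show "mu differentiable_on \<Gamma>" "Sig differentiable_on \<Psi>" by (fact diff)+
    show "\<forall>\<xi>\<in>\<Psi>. sym_posdef (Sig \<xi>)" by (fact P3)
    show "\<gamma>0 \<in> \<Gamma>" "\<xi>0 \<in> \<Psi>" by (fact truth)+
    show "Gbar_class CARD('m) g0" by (fact g0_class)
    show "\<forall>t>0. 0 < g0 t" by (fact g0_pos)
    show "g0 C1_differentiable_on {0<..}" by (fact g0_C1)
    show "integrable (RES (mu \<gamma>0) (Sig \<xi>0) g0) (\<lambda>x. (mahal (mu \<gamma>0) (Sig \<xi>0) x)\<^sup>2 * (- 2 * deriv g0 (mahal (mu \<gamma>0) (Sig \<xi>0) x) / g0 (mahal (mu \<gamma>0) (Sig \<xi>0) x))\<^sup>2)"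
      using P4(2) unfolding P0_def Q_def \<phi>0_def by simp
    show "integrable (RES (mu \<gamma>0) (Sig \<xi>0) g0) (\<lambda>x. mahal (mu \<gamma>0) (Sig \<xi>0) x * (- 2 * deriv g0 (mahal (mu \<gamma>0) (Sig \<xi>0) x) / g0 (mahal (mu \<gamma>0) (Sig \<xi>0) x))\<^sup>2)"
      using P4(3) unfolding P0_def Q_def \<phi>0_def by simp
  qed
  show ?thesis
    unfolding P0_def Q_def s\<gamma>_def s\<xi>_def by (rule R.main)
qed

end
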